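(* For every integer $n\geq 1$, \[ (n+1)^{n-1}=\sum_{T}\frac{n!}{2^n}\prod_{v\in T}\left(1+\frac{1}{h(v)}\right), \] where the sum ranges over all (unlabeled) binary trees $T$ with $n$ vertices.
   Context: A binary tree is a rooted tree in which each vertex has a left subtree and a right subtree, each possibly empty; binary trees differing in whether a child is a left or a right child are distinct. For a vertex $v$ of a binary tree $T$, the hook length $h(v)$ is the number of descendants of $v$ in $T$, including $v$ itself. *)

theory Defs
  imports Complex_Main "HOL-Library.Tree"
begin

text \<open>Unlabeled binary trees are modelled as values of type unit tree
 (Leaf is the empty tree; Node l () r has left subtree l and right subtree r). The hook length of the root of a subtree
 Node l () r is the number of its vertices, i.e. its size.\<close>

definition binary_trees :: "nat \<Rightarrow> unit tree set" where
  "binary_trees n = {t. size t = n}"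

fun hook_prod :: "unit tree \<Rightarrow> real" where
  "hook_prod Leaf = 1"
| "hook_prod (Node l x r) =
     (1 + 1 / real (size (Node l x r))) * hook_prod l * hook_prod r"

end

theory Submission
  imports Defs
begin

lemma pascal_sum:
  fixes g :: "nat \<Rightarrow> real"
  shows "(\<Sum>k\<le>Suc M. real (Suc M choose k) * g k) =
         (\<Sum>k\<le>M. real (M choose k) * g k) + (\<Sum>k\<le>M. real (M choose k) * g (Suc k))"
proof -
  have a: "(\<Sum>k\<le>Suc M. real (M choose k) * g k) = (\<Sum>k\<le>M. real (M choose k) * g k)"
    by simp
  have b: "(\<Sum>k\<le>Suc M. real (Suc M choose k) * g k)
      = g 0 + (\<Sum>k\<le>M. real (M choose k) * g (Suc k)) + (\<Sum>k\<le>M. real (M choose Suc k) * g (Suc k))"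
    by (simp only: sum.atMost_Suc_shift binomial_Suc_Suc of_nat_add distrib_right sum.distrib
        add.assoc) simp
  have c: "g 0 + (\<Sum>k\<le>M. real (M choose Suc k) * g (Suc k)) = (\<Sum>k\<le>Suc M. real (M choose k) * g k)"
    by (simp only: sum.atMost_Suc_shift[of _ M]) simp
  show ?thesis using a b c by simp
qed

lemma shift_pow:
  fixes a :: real
  shows "(a + 1)^j - a^j = (\<Sum>i<j. real (j choose i) * a^i)"
proof -
  have "(a+1)^j = (\<Sum>i\<le>j. real (j choose i) * a^i)"
    using binomial_ring[of a 1 j] by simp
  also have "\<dots> = (\<Sum>i<j. real (j choose i) * a^i) + a^j"
    by (simp add: lessThan_Suc_atMost[symmetric])
  finally show ?thesis by simp
qed

lemma fin_diff:
  "j < M \<Longrightarrow> (\<Sum>k\<le>M. real (M choose k) * (-1)^k * (x + real k)^j) = (0::real)"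
proof (induction M arbitrary: j x)
  case 0 then show ?case by simp
next
  case (Suc M)
  define D where "D = (\<lambda>y i. (\<Sum>k\<le>M. real (M choose k) * (-1)^k * (y + real k)^i))"
  have "(\<Sum>k\<le>Suc M. real (Suc M choose k) * (-1)^k * (x + real k)^j)
      = (\<Sum>k\<le>Suc M. real (Suc M choose k) * ((-1)^k * (x + real k)^j))"
    by (simp add: mult.assoc)
  also have "\<dots> = D x j - D (x+1) j"
    unfolding pascal_sum D_def by (simp add: sum_negf algebra_simps)
  also have "\<dots> = (\<Sum>k\<le>M. real (M choose k) * (-1)^k * ((x + real k)^j - (x + real k + 1)^j))"
    unfolding D_def by (simp add: sum_subtractf[symmetric] algebra_simps)
  also have "\<dots> = - (\<Sum>k\<le>M. \<Sum>i<j. real (j choose i) * (real (M choose k) * (-1)^k * (x + real k)^i))"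
    (is "_ = ?R")
  proof -
    have t: "real (M choose k) * (-1)^k * ((x + real k)^j - (x + real k + 1)^j)
       = - (\<Sum>i<j. real (j choose i) * (real (M choose k) * (-1)^k * (x + real k)^i))" for k
    proof -
      have "(x + real k + 1)^j - (x + real k)^j = (\<Sum>i<j. real (j choose i) * (x + real k)^i)"
        by (rule shift_pow)
      then have "real (M choose k) * (-1)^k * ((x + real k)^j - (x + real k + 1)^j)
         = - (real (M choose k) * (-1)^k * (\<Sum>i<j. real (j choose i) * (x + real k)^i))"
        by (simp add: algebra_simps)
      then show ?thesis
        by (simp add: sum_distrib_left algebra_simps)
    qed
    show ?thesis by (simp only: t sum_negf)
  qed
  also have "\<dots> = - (\<Sum>i<j. real (j choose i) * D x i)"
    unfolding D_def by (subst sum.swap) (simp add: sum_distrib_left)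
  also have "\<dots> = 0"
    using Suc.IH Suc.prems unfolding D_def by simp
  finally show ?case .
qed

definition P :: "nat \<Rightarrow> real \<Rightarrow> real" where
  "P k x = (if k = 0 then 1 else x * (x + real k)^(k-1))"

lemma neg_pow_split: "k \<le> M \<Longrightarrow> (-1::real)^(M-k) = (-1)^M * (-1)^k"
proof -
  assume "k \<le> M"
  then have "(-1::real)^M = (-1)^(M-k) * (-1)^k" by (simp add: power_add[symmetric])
  then have "(-1::real)^M * (-1)^k = (-1)^(M-k) * ((-1)^k * (-1)^k)" by simp
  also have "(-1::real)^k * (-1)^k = 1" by (simp add: power_add[symmetric])
  finally show ?thesis by simp
qed

lemma abelF:
  "(\<Sum>k\<le>m. real (m choose k) * P k x * (z - real k)^(m-k)) = (x+z)^m"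
proof (induction m arbitrary: z)
  case 0 then show ?case by (simp add: P_def)
next
  case (Suc m)
  define L where "L = (\<lambda>z. (\<Sum>k\<le>Suc m. real (Suc m choose k) * P k x * (z - real k)^(Suc m-k)))"
  have dL: "(L has_real_derivative (real (Suc m) * (x+z)^m)) (at z)" for z
  proof -
    have "(L has_real_derivative
       (\<Sum>k\<le>Suc m. real (Suc m choose k) * P k x * (real (Suc m - k) * (z - real k)^(Suc m - k - 1)))) (at z)"
      unfolding L_def by (auto intro!: derivative_eq_intros sum.cong simp: mult_ac)
    moreover have "(\<Sum>k\<le>Suc m. real (Suc m choose k) * P k x * (real (Suc m - k) * (z - real k)^(Suc m - k - 1)))
       = (\<Sum>k\<le>m. real (Suc m) * (real (m choose k) * P k x * (z - real k)^(m - k)))"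
    proof -
      have "(\<Sum>k\<le>Suc m. real (Suc m choose k) * P k x * (real (Suc m - k) * (z - real k)^(Suc m - k - 1)))
         = (\<Sum>k\<le>m. real (Suc m choose k) * P k x * (real (Suc m - k) * (z - real k)^(Suc m - k - 1)))"
        by simp
      also have "\<dots> = (\<Sum>k\<le>m. real (Suc m) * (real (m choose k) * P k x * (z - real k)^(m - k)))"
      proof (rule sum.cong[OF refl])
        fix k assume "k \<in> {..m}"
        then have k: "k \<le> m" by simp
        have e: "real (Suc m - k) * real (Suc m choose k) = real (Suc m) * real (m choose k)"
          using binomial_absorb_comp[of "Suc m" k] by (metis diff_Suc_1 of_nat_mult)
        have "Suc m - k - 1 = m - k" by simp
        then have "real (Suc m choose k) * P k x * (real (Suc m - k) * (z - real k)^(Suc m - k - 1))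
            = (real (Suc m - k) * real (Suc m choose k)) * (P k x * (z - real k)^(m - k))"
          by (simp only: mult_ac)
        also have "\<dots> = real (Suc m) * (real (m choose k) * P k x * (z - real k)^(m - k))"
          unfolding e by (simp only: mult_ac)
        finally show "real (Suc m choose k) * P k x * (real (Suc m - k) * (z - real k)^(Suc m - k - 1))
            = real (Suc m) * (real (m choose k) * P k x * (z - real k)^(m - k))" .
      qed
      finally show ?thesis .
    qed
    ultimately show ?thesis using Suc.IH by (simp add: sum_distrib_left[symmetric])
  qed
  have d0: "((\<lambda>z. L z - (x+z)^Suc m) has_real_derivative 0) (at z)" for z
  proof -
    have e: "real (Suc m) * (x+z)^m = (x + z) ^ m + real m * (x + z) ^ (m - Suc 0) * (x + z)"
    proof (cases m)
      case 0 then show ?thesis by simp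
    next
      case (Suc k) then show ?thesis by (simp add: algebra_simps)
    qed
    show ?thesis using dL[of z] e by (auto intro!: derivative_eq_intros)
  qed
  have c: "L z - (x+z)^Suc m = L (-x) - (x + (-x))^Suc m"
    using DERIV_isconst_all[of "\<lambda>z. L z - (x+z)^Suc m" z "-x"] d0 by blast
  have "L (-x) = (\<Sum>k\<le>Suc m. x * (-1)^(Suc m) * (real (Suc m choose k) * (-1)^k * (x + real k)^m))"
    unfolding L_def
  proof (rule sum.cong[OF refl])
    fix k assume "k \<in> {..Suc m}"
    then have k: "k \<le> Suc m" by simp
    have np: "(-x - real k)^(Suc m - k) = (-1)^(Suc m) * (-1)^k * (x + real k)^(Suc m - k)"
    proof -
      have "(-x - real k)^(Suc m - k) = (-1)^(Suc m - k) * (x + real k)^(Suc m - k)"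
        by (simp only: power_minus[symmetric] minus_diff_eq diff_minus_eq_add minus_add_distrib) simp
      then show ?thesis using neg_pow_split[OF k] by simp
    qed
    show "real (Suc m choose k) * P k x * (- x - real k)^(Suc m - k)
       = x * (-1)^(Suc m) * (real (Suc m choose k) * (-1)^k * (x + real k)^m)"
    proof (cases "k = 0")
      case True then show ?thesis by (simp add: P_def np power_minus[of x])
    next
      case False
      then have "(x + real k)^(k-1) * (x + real k)^(Suc m - k) = (x + real k)^m"
        using k by (simp add: power_add[symmetric])
      then show ?thesis using False np
        by (simp add: P_def)
    qed
  qed
  also have "\<dots> = x * (-1)^(Suc m) * (\<Sum>k\<le>Suc m. real (Suc m choose k) * (-1)^k * (x + real k)^m)"
    by (simp only: sum_distrib_left)
  also have "\<dots> = 0" using fin_diff[of m "Suc m" x] by (simp only: mult_zero_right)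
  finally have "L (-x) = 0" .
  then show ?case using c unfolding L_def by simp
qed


lemma P_alt: "P j y = (y + real j)^j - real j * (y + real j)^(j-1)"
proof (cases j)
  case 0 then show ?thesis by (simp add: P_def)
next
  case (Suc i)
  then show ?thesis by (simp add: P_def algebra_simps)
qed

lemma abel_sym_pos:
  assumes "m \<ge> 1"
  shows "(\<Sum>k\<le>m. real (m choose k) * P k x * P (m-k) y) = (x+y) * (x+y+real m)^(m-1)"
proof -
  obtain n where m: "m = Suc n" using assms by (cases m) auto
  have A: "(\<Sum>k\<le>m. real (m choose k) * P k x * (y + real (m-k))^(m-k)) = (x+y+real m)^m"
  proof -
    have "(\<Sum>k\<le>m. real (m choose k) * P k x * (y + real (m-k))^(m-k))
       = (\<Sum>k\<le>m. real (m choose k) * P k x * ((y + real m) - real k)^(m-k))"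
      by (rule sum.cong) (auto simp: of_nat_diff algebra_simps)
    also have "\<dots> = (x + (y + real m))^m" by (rule abelF)
    finally show ?thesis by (simp add: add.assoc)
  qed
  have B: "(\<Sum>k\<le>m. real (m choose k) * P k x * (real (m-k) * (y + real (m-k))^(m-k-1)))
      = real m * (x+y+real m)^n"
  proof -
    have "(\<Sum>k\<le>m. real (m choose k) * P k x * (real (m-k) * (y + real (m-k))^(m-k-1)))
       = (\<Sum>k\<le>n. real (Suc n choose k) * P k x * (real (Suc n-k) * (y + real (Suc n-k))^(Suc n-k-1)))"
      unfolding m by simp
    also have "\<dots> = (\<Sum>k\<le>n. real (Suc n) * (real (n choose k) * P k x * ((y + real (Suc n)) - real k)^(n-k)))"
    proof (rule sum.cong[OF refl])
      fix k assume "k \<in> {..n}"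
      then have k: "k \<le> n" by simp
      have e: "real (Suc n - k) * real (Suc n choose k) = real (Suc n) * real (n choose k)"
        using binomial_absorb_comp[of "Suc n" k] by (metis diff_Suc_1 of_nat_mult)
      have f: "y + real (Suc n - k) = (y + real (Suc n)) - real k" using k by (simp add: of_nat_diff)
      have g: "Suc n - k - 1 = n - k" by simp
      have "real (Suc n choose k) * P k x * (real (Suc n-k) * (y + real (Suc n-k))^(Suc n-k-1))
         = (real (Suc n - k) * real (Suc n choose k)) * (P k x * ((y + real (Suc n)) - real k)^(n-k))"
        unfolding f g by (simp only: mult_ac)
      also have "\<dots> = real (Suc n) * (real (n choose k) * P k x * ((y + real (Suc n)) - real k)^(n-k))"
        unfolding e by (simp only: mult_ac)
      finally show "real (Suc n choose k) * P k x * (real (Suc n-k) * (y + real (Suc n-k))^(Suc n-k-1))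
         = real (Suc n) * (real (n choose k) * P k x * ((y + real (Suc n)) - real k)^(n-k))" .
    qed
    also have "\<dots> = real (Suc n) * (x + (y + real (Suc n)))^n"
      by (simp only: sum_distrib_left[symmetric] abelF)
    finally show ?thesis unfolding m by (simp add: add.assoc)
  qed
  have "(\<Sum>k\<le>m. real (m choose k) * P k x * P (m-k) y)
     = (\<Sum>k\<le>m. real (m choose k) * P k x * (y + real (m-k))^(m-k))
     - (\<Sum>k\<le>m. real (m choose k) * P k x * (real (m-k) * (y + real (m-k))^(m-k-1)))"
    unfolding sum_subtractf[symmetric] P_alt[of "m - _" y] by (simp add: algebra_simps)
  also have "\<dots> = (x+y+real m)^m - real m * (x+y+real m)^n" using A B by simp
  also have "\<dots> = (x+y) * (x+y+real m)^(m-1)" unfolding m by (simp add: algebra_simps)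
  finally show ?thesis .
qed

lemma abel_sym:
  "(x+y+real m) * (\<Sum>k\<le>m. real (m choose k) * P k x * P (m-k) y) = (x+y) * (x+y+real m)^m"
proof (cases m)
  case 0 then show ?thesis by (simp add: P_def)
next
  case (Suc n)
  then have "(\<Sum>k\<le>m. real (m choose k) * P k x * P (m-k) y) = (x+y) * (x+y+real m)^n"
    using abel_sym_pos[of m x y] by simp
  then show ?thesis using Suc by (simp add: algebra_simps)
qed


lemma bt_Suc: "binary_trees (Suc n) =
   (\<lambda>(l,r). Node l () r) ` (\<Union>i\<le>n. binary_trees i \<times> binary_trees (n-i))"
proof
  show "binary_trees (Suc n) \<subseteq> (\<lambda>(l,r). Node l () r) ` (\<Union>i\<le>n. binary_trees i \<times> binary_trees (n-i))"
  proof
    fix t assume "t \<in> binary_trees (Suc n)"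
    then have s: "size t = Suc n" by (simp add: binary_trees_def)
    then obtain l r where t: "t = Node l () r" by (cases t) auto
    with s have "size l \<le> n" "size r = n - size l" by auto
    then have "(l,r) \<in> (\<Union>i\<le>n. binary_trees i \<times> binary_trees (n-i))"
      by (auto simp: binary_trees_def)
    then show "t \<in> (\<lambda>(l,r). Node l () r) ` (\<Union>i\<le>n. binary_trees i \<times> binary_trees (n-i))"
      using t by (auto intro!: image_eqI[where x="(l,r)"])
  qed
  show "(\<lambda>(l,r). Node l () r) ` (\<Union>i\<le>n. binary_trees i \<times> binary_trees (n-i)) \<subseteq> binary_trees (Suc n)"
    by (auto simp: binary_trees_def)
qed

lemma bt_finite: "finite (binary_trees n)"
proof (induction n rule: less_induct)
  case (less n)
  show ?case
  proof (cases n)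
    case 0
    then have "binary_trees n = {Leaf}" by (auto simp: binary_trees_def)
    then show ?thesis by simp
  next
    case (Suc k)
    have "finite (\<Union>i\<le>k. binary_trees i \<times> binary_trees (k-i))"
      using less Suc by (auto intro!: finite_UN_I finite_cartesian_product)
    then show ?thesis unfolding Suc bt_Suc by simp
  qed
qed

definition S :: "nat \<Rightarrow> real" where
  "S n = (\<Sum>T\<in>binary_trees n. hook_prod T)"

lemma S_Suc: "S (Suc n) = (1 + 1 / real (Suc n)) * (\<Sum>i\<le>n. S i * S (n-i))"
proof -
  let ?U = "\<Union>i\<le>n. binary_trees i \<times> binary_trees (n-i)"
  let ?c = "1 + 1 / real (Suc n)"
  have inj: "inj_on (\<lambda>(l,r). Node l () r) ?U" by (auto simp: inj_on_def)
  have "S (Suc n) = (\<Sum>p\<in>?U. hook_prod ((\<lambda>(l,r). Node l () r) p))"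
    unfolding S_def bt_Suc using sum.reindex[OF inj, of hook_prod] by (simp add: o_def)
  also have "\<dots> = (\<Sum>i\<le>n. \<Sum>p\<in>binary_trees i \<times> binary_trees (n-i). hook_prod ((\<lambda>(l,r). Node l () r) p))"
    by (rule sum.UNION_disjoint) (auto simp: bt_finite, auto simp: binary_trees_def)
  also have "\<dots> = (\<Sum>i\<le>n. \<Sum>p\<in>binary_trees i \<times> binary_trees (n-i). ?c * (hook_prod (fst p) * hook_prod (snd p)))"
  proof (rule sum.cong[OF refl], rule sum.cong[OF refl])
    fix i p assume "i \<in> {..n}" "p \<in> binary_trees i \<times> binary_trees (n-i)"
    then have "size (fst p) + size (snd p) = n" by (auto simp: binary_trees_def)
    then show "hook_prod ((\<lambda>(l,r). Node l () r) p) = ?c * (hook_prod (fst p) * hook_prod (snd p))"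
      by (cases p) simp
  qed
  also have "\<dots> = (\<Sum>i\<le>n. ?c * (S i * S (n-i)))"
  proof -
    have pr: "(\<Sum>p\<in>A \<times> B. hook_prod (fst p) * hook_prod (snd p)) = sum hook_prod A * sum hook_prod B" for A B
      by (simp add: sum_product sum.cartesian_product case_prod_beta)
    show ?thesis unfolding S_def sum_distrib_left[symmetric] pr ..
  qed
  also have "\<dots> = ?c * (\<Sum>i\<le>n. S i * S (n-i))" by (simp only: sum_distrib_left)
  finally show ?thesis .
qed

lemma S_formula: "S n = 2^n * P n 1 / fact n"
proof (induction n rule: less_induct)
  case (less n)
  show ?case
  proof (cases n)
    case 0
    then show ?thesis by (simp add: S_def binary_trees_def P_def)
  next
    case (Suc k)
    have t: "S i * S (k-i) = 2^k / fact k * (real (k choose i) * P i 1 * P (k-i) 1)" if "i \<le> k" for i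
    proof -
      have "S i * S (k-i) = (2^i * P i 1 / fact i) * (2^(k-i) * P (k-i) 1 / fact (k-i))"
        using less Suc that by simp
      also have "\<dots> = 2^k / fact k * (fact k / (fact i * fact (k-i)) * P i 1 * P (k-i) 1)"
        using that by (simp add: field_simps power_add[symmetric])
      also have "\<dots> = 2^k / fact k * (real (k choose i) * P i 1 * P (k-i) 1)"
        by (simp only: binomial_fact[OF that])
      finally show ?thesis .
    qed
    have sum: "(\<Sum>i\<le>k. S i * S (k-i)) = 2^k / fact k * (\<Sum>i\<le>k. real (k choose i) * P i 1 * P (k-i) 1)"
      using t by (simp add: sum_distrib_left)
    have ab: "(2 + real k) * (\<Sum>i\<le>k. real (k choose i) * P i 1 * P (k-i) 1) = 2 * (2 + real k)^k"
      using abel_sym[of 1 1 k] by simp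
    have "S n = (1 + 1 / real (Suc k)) * (2^k / fact k * (\<Sum>i\<le>k. real (k choose i) * P i 1 * P (k-i) 1))"
      using S_Suc sum Suc by simp
    also have "\<dots> = 2^k / (real (Suc k) * fact k) * ((2 + real k) * (\<Sum>i\<le>k. real (k choose i) * P i 1 * P (k-i) 1))"
      by (simp add: field_simps)
    also have "\<dots> = 2^k / (real (Suc k) * fact k) * (2 * (2 + real k)^k)" by (simp only: ab)
    also have "\<dots> = 2^n * P n 1 / fact n"
      using Suc by (simp add: P_def algebra_simps)
    finally show ?thesis .
  qed
qed

theorem theorem1:
  fixes n :: nat
  assumes "n \<ge> 1"
  shows "real ((n + 1) ^ (n - 1)) =
    (\<Sum>T\<in>binary_trees n. fact n / 2 ^ n * hook_prod T)"
proof -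
  have "(\<Sum>T\<in>binary_trees n. fact n / 2 ^ n * hook_prod T) = fact n / 2^n * S n"
    unfolding S_def by (simp add: sum_distrib_left)
  also have "\<dots> = P n 1" by (simp add: S_formula)
  also have "\<dots> = real ((n + 1) ^ (n - 1))" using assms by (simp add: P_def)
  finally show ?thesis by simp
qed

end
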